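(* Let $G$ be a finitely generated group, $H$ a finitely generated subgroup, $A$ a finite alphabet, $S\subseteq H$ finite and $\mu:A^S\to A$. Let $\Phi_H:A^H\to A^H$ and $\Phi_G:A^G\to A^G$ be the cellular automata defined by $\Phi_H(x)(h)=\mu(s\mapsto x(hs))$ and $\Phi_G(x)(g)=\mu(s\mapsto x(gs))$. If $\Phi_G$ has an equicontinuity point, then so does $\Phi_H$.
   Context: Metrics: fix a finite generating set $E_H$ of $H$ closed under inverses and a finite generating set $D\supseteq E_H$ of $G$ closed under inverses, with word metrics $d_H$, $d_G$. The Cantor metric on $A^H$ is $d^H(x,y)=2^{-k}$ with $k=\min\{d_H(1,h):x(h)\neq y(h)\}$, and on $A^G$ similarly $d^G$ using $d_G$; $B^H$, $B^G$ denote closed balls. A configuration $x$ is an equicontinuity point of a map $\Phi$ on such a space with balls $B$ if $\forall\epsilon>0\,\exists\delta>0\,\forall t\in\mathbb{N}$, $\Phi^t(B(x,\delta))\subseteq B(\Phi^t(x),\epsilon)$. (This notion does not depend on the choice of generating sets.) *)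

theory Defs
  imports Complex_Main "HOL-Algebra.Group" "HOL-Algebra.Generated_Groups" "HOL-Library.FuncSet"
begin

definition word_len :: "('g, 'b) monoid_scheme \<Rightarrow> 'g set \<Rightarrow> 'g \<Rightarrow> nat" where
  "word_len G D g =
     (LEAST n. \<exists>ws. length ws = n \<and> set ws \<subseteq> D \<and> foldr (\<lambda>a b. a \<otimes>\<^bsub>G\<^esub> b) ws \<one>\<^bsub>G\<^esub> = g)"

definition cantor_dist :: "('g, 'b) monoid_scheme \<Rightarrow> 'g set \<Rightarrow> 'g set \<Rightarrow> ('g \<Rightarrow> 'a) \<Rightarrow> ('g \<Rightarrow> 'a) \<Rightarrow> real" where
  "cantor_dist G D X x y =
     (if \<exists>h\<in>X. x h \<noteq> y h
      then (1/2) ^ (LEAST k. \<exists>h\<in>X. x h \<noteq> y h \<and> word_len G D h = k)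
      else 0)"

definition cantor_ball :: "('g, 'b) monoid_scheme \<Rightarrow> 'g set \<Rightarrow> 'g set \<Rightarrow> 'a set \<Rightarrow> ('g \<Rightarrow> 'a) \<Rightarrow> real \<Rightarrow> ('g \<Rightarrow> 'a) set" where
  "cantor_ball G D X A x r = {y \<in> X \<rightarrow>\<^sub>E A. cantor_dist G D X x y \<le> r}"

definition equicontinuity_point ::
  "('g, 'b) monoid_scheme \<Rightarrow> 'g set \<Rightarrow> 'g set \<Rightarrow> 'a set \<Rightarrow> (('g \<Rightarrow> 'a) \<Rightarrow> ('g \<Rightarrow> 'a)) \<Rightarrow> ('g \<Rightarrow> 'a) \<Rightarrow> bool" where
  "equicontinuity_point G D X A Phi x \<longleftrightarrow>
     x \<in> X \<rightarrow>\<^sub>E A \<and>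
     (\<forall>\<epsilon>>0. \<exists>\<delta>>0. \<forall>t::nat.
        (Phi ^^ t) ` cantor_ball G D X A x \<delta> \<subseteq> cantor_ball G D X A ((Phi ^^ t) x) \<epsilon>)"

definition cellular_automaton ::
  "('g, 'b) monoid_scheme \<Rightarrow> 'g set \<Rightarrow> (('g \<Rightarrow> 'a) \<Rightarrow> 'a) \<Rightarrow> 'g set \<Rightarrow> ('g \<Rightarrow> 'a) \<Rightarrow> ('g \<Rightarrow> 'a)" where
  "cellular_automaton G S mu X x = (\<lambda>h\<in>X. mu (\<lambda>s\<in>S. x (h \<otimes>\<^bsub>G\<^esub> s)))"

end

theory Submission
  imports Defs
begin

lemma foldr_carrier:
  assumes "group G" "set ws \<subseteq> carrier G"
  shows "foldr (\<lambda>a b. a \<otimes>\<^bsub>G\<^esub> b) ws \<one>\<^bsub>G\<^esub> \<in> carrier G"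
  using assms(2)
proof (induction ws)
  case Nil then show ?case using assms(1) by (simp add: group.is_monoid monoid.one_closed)
next
  case (Cons a ws) then show ?case using assms(1) by (simp add: group.is_monoid monoid.m_closed)
qed

lemma foldr_append_prod:
  assumes "group G" "set xs \<subseteq> carrier G" "set ys \<subseteq> carrier G"
  shows "foldr (\<lambda>a b. a \<otimes>\<^bsub>G\<^esub> b) (xs @ ys) \<one>\<^bsub>G\<^esub>
       = foldr (\<lambda>a b. a \<otimes>\<^bsub>G\<^esub> b) xs \<one>\<^bsub>G\<^esub> \<otimes>\<^bsub>G\<^esub> foldr (\<lambda>a b. a \<otimes>\<^bsub>G\<^esub> b) ys \<one>\<^bsub>G\<^esub>"
  using assms(2)
proof (induction xs)
  case Nil
  have "foldr (\<lambda>a b. a \<otimes>\<^bsub>G\<^esub> b) ys \<one>\<^bsub>G\<^esub> \<in> carrier G"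
    using foldr_carrier[OF assms(1,3)] .
  then show ?case using assms(1) by (simp add: group.is_monoid monoid.l_one)
next
  case (Cons a xs)
  then show ?case using assms(1) foldr_carrier[OF assms(1)] assms(3)
    by (simp add: group.is_monoid monoid.m_assoc)
qed

lemma word_exists:
  assumes "group G" "D \<subseteq> carrier G" "\<forall>d\<in>D. inv\<^bsub>G\<^esub> d \<in> D" "g \<in> generate G D"
  shows "\<exists>ws. set ws \<subseteq> D \<and> foldr (\<lambda>a b. a \<otimes>\<^bsub>G\<^esub> b) ws \<one>\<^bsub>G\<^esub> = g"
  using assms(4)
proof (induction rule: generate.induct)
  case one
  then show ?case by (intro exI[of _ "[]"]) simp
next
  case (incl h)
  then show ?case using assms(1,2)
    by (intro exI[of _ "[h]"]) (auto simp: group.is_monoid monoid.r_one)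
next
  case (inv h)
  then have "inv\<^bsub>G\<^esub> h \<in> D" using assms(3) by blast
  then show ?case using assms(1,2)
    by (intro exI[of _ "[inv\<^bsub>G\<^esub> h]"]) (auto simp: group.is_monoid monoid.r_one)
next
  case (eng h1 h2)
  then obtain xs ys where "set xs \<subseteq> D" "foldr (\<lambda>a b. a \<otimes>\<^bsub>G\<^esub> b) xs \<one>\<^bsub>G\<^esub> = h1"
    "set ys \<subseteq> D" "foldr (\<lambda>a b. a \<otimes>\<^bsub>G\<^esub> b) ys \<one>\<^bsub>G\<^esub> = h2" by blast
  then show ?case using foldr_append_prod[OF assms(1), of xs ys] assms(2)
    by (intro exI[of _ "xs @ ys"]) auto
qed

lemma word_len_witness:
  assumes "\<exists>ws. set ws \<subseteq> D \<and> foldr (\<lambda>a b. a \<otimes>\<^bsub>G\<^esub> b) ws \<one>\<^bsub>G\<^esub> = g"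
  shows "\<exists>ws. length ws = word_len G D g \<and> set ws \<subseteq> D \<and> foldr (\<lambda>a b. a \<otimes>\<^bsub>G\<^esub> b) ws \<one>\<^bsub>G\<^esub> = g"
proof -
  from assms obtain ws where "set ws \<subseteq> D \<and> foldr (\<lambda>a b. a \<otimes>\<^bsub>G\<^esub> b) ws \<one>\<^bsub>G\<^esub> = g" by blast
  then have "\<exists>n ws. length ws = n \<and> set ws \<subseteq> D \<and> foldr (\<lambda>a b. a \<otimes>\<^bsub>G\<^esub> b) ws \<one>\<^bsub>G\<^esub> = g" by blast
  then show ?thesis unfolding word_len_def by (rule LeastI_ex)
qed

lemma word_len_le:
  assumes "set ws \<subseteq> D" "foldr (\<lambda>a b. a \<otimes>\<^bsub>G\<^esub> b) ws \<one>\<^bsub>G\<^esub> = g"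
  shows "word_len G D g \<le> length ws"
  unfolding word_len_def using assms by (intro Least_le) blast

lemma dist_le_iff:
  "cantor_dist G W X x y \<le> (1/2)^m \<longleftrightarrow> (\<forall>h\<in>X. word_len G W h < m \<longrightarrow> x h = y h)"
proof (cases "\<exists>h\<in>X. x h \<noteq> y h")
  case True
  define k where "k = (LEAST k. \<exists>h\<in>X. x h \<noteq> y h \<and> word_len G W h = k)"
  have d: "cantor_dist G W X x y = (1/2)^k" using True unfolding cantor_dist_def k_def by simp
  from True obtain h0 where h0: "h0 \<in> X" "x h0 \<noteq> y h0" by blast
  have kex: "\<exists>h\<in>X. x h \<noteq> y h \<and> word_len G W h = k" unfolding k_def
    by (rule LeastI[of _ "word_len G W h0"]) (use h0 in blast)
  have kmin: "k \<le> word_len G W h" if "h \<in> X" "x h \<noteq> y h" for h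
    unfolding k_def by (rule Least_le) (use that in blast)
  have pw: "((1/2::real)^k \<le> (1/2)^m) = (m \<le> k)" by (rule power_decreasing_iff) simp_all
  have eq: "m \<le> k \<longleftrightarrow> (\<forall>h\<in>X. word_len G W h < m \<longrightarrow> x h = y h)"
  proof
    assume mk: "m \<le> k"
    show "\<forall>h\<in>X. word_len G W h < m \<longrightarrow> x h = y h"
    proof (intro ballI impI)
      fix h assume h: "h \<in> X" "word_len G W h < m"
      show "x h = y h"
      proof (rule ccontr)
        assume "x h \<noteq> y h"
        then have "k \<le> word_len G W h" using kmin h(1) by blast
        then show False using mk h(2) by linarith
      qed
    qed
  next
    assume A: "\<forall>h\<in>X. word_len G W h < m \<longrightarrow> x h = y h"
    from kex obtain h1 where h1: "h1 \<in> X" "x h1 \<noteq> y h1" "word_len G W h1 = k" by blast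
    then have "\<not> word_len G W h1 < m" using A by blast
    then show "m \<le> k" using h1(3) by linarith
  qed
  show ?thesis unfolding d pw eq ..
next
  case False
  then show ?thesis unfolding cantor_dist_def by simp
qed

lemma restrict_step:
  assumes "H \<subseteq> carrier G" "\<And>h s. h \<in> H \<Longrightarrow> s \<in> S \<Longrightarrow> h \<otimes>\<^bsub>G\<^esub> s \<in> H"
  shows "restrict (cellular_automaton G S mu (carrier G) v) H = cellular_automaton G S mu H (restrict v H)"
  unfolding cellular_automaton_def
proof (rule ext)
  fix h
  show "restrict (restrict (\<lambda>h. mu (restrict (\<lambda>s. v (h \<otimes>\<^bsub>G\<^esub> s)) S)) (carrier G)) H h =
        restrict (\<lambda>h. mu (restrict (\<lambda>s. restrict v H (h \<otimes>\<^bsub>G\<^esub> s)) S)) H h"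
  proof (cases "h \<in> H")
    case True
    have "restrict (\<lambda>s. v (h \<otimes>\<^bsub>G\<^esub> s)) S = restrict (\<lambda>s. restrict v H (h \<otimes>\<^bsub>G\<^esub> s)) S"
      using assms(2)[OF True] by (auto simp: restrict_def)
    then show ?thesis using True assms(1) by auto
  qed simp
qed

lemma restrict_iter:
  assumes "H \<subseteq> carrier G" "\<And>h s. h \<in> H \<Longrightarrow> s \<in> S \<Longrightarrow> h \<otimes>\<^bsub>G\<^esub> s \<in> H"
  shows "restrict ((cellular_automaton G S mu (carrier G) ^^ t) v) H = (cellular_automaton G S mu H ^^ t) (restrict v H)"
proof (induction t)
  case 0 then show ?case by simp
next
  case (Suc t)
  have "restrict ((cellular_automaton G S mu (carrier G) ^^ Suc t) v) H
     = cellular_automaton G S mu H (restrict ((cellular_automaton G S mu (carrier G) ^^ t) v) H)"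
    using restrict_step[OF assms, where mu=mu and v="(cellular_automaton G S mu (carrier G) ^^ t) v"] by simp
  then show ?case using Suc by simp
qed

theorem proposition5:
  fixes G :: "('g, 'b) monoid_scheme"
    and H E D S :: "'g set"
    and A :: "'a set"
    and mu :: "('g \<Rightarrow> 'a) \<Rightarrow> 'a"
  assumes "group G"
    and "subgroup H G"
    and "finite E" "E \<subseteq> H" "\<forall>e\<in>E. inv\<^bsub>G\<^esub> e \<in> E" "generate G E = H"
    and "finite D" "E \<subseteq> D" "D \<subseteq> carrier G" "\<forall>d\<in>D. inv\<^bsub>G\<^esub> d \<in> D"
    and "generate G D = carrier G"
    and "finite A"
    and "finite S" "S \<subseteq> H"
    and "mu \<in> (S \<rightarrow>\<^sub>E A) \<rightarrow> A"
    and "\<exists>x. equicontinuity_point G D (carrier G) A (cellular_automaton G S mu (carrier G)) x"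
  shows "\<exists>x. equicontinuity_point G E H A (cellular_automaton G S mu H) x"
proof -
  let ?PG = "cellular_automaton G S mu (carrier G)"
  let ?PH = "cellular_automaton G S mu H"
  let ?wG = "word_len G D"
  let ?wH = "word_len G E"
  from assms(16) obtain x where x: "equicontinuity_point G D (carrier G) A ?PG x" by blast
  have xA: "x \<in> carrier G \<rightarrow>\<^sub>E A" using x unfolding equicontinuity_point_def by blast
  have xE: "\<forall>\<epsilon>>0. \<exists>\<delta>>0. \<forall>t::nat. (?PG ^^ t) ` cantor_ball G D (carrier G) A x \<delta>
      \<subseteq> cantor_ball G D (carrier G) A ((?PG ^^ t) x) \<epsilon>"
    using x unfolding equicontinuity_point_def by blast
  have Hc: "H \<subseteq> carrier G" using assms(2) subgroup.subset by blast
  have Hm: "\<And>h s. h \<in> H \<Longrightarrow> s \<in> S \<Longrightarrow> h \<otimes>\<^bsub>G\<^esub> s \<in> H"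
  proof -
    fix h s assume "h \<in> H" "s \<in> S"
    then have "s \<in> H" using assms(14) by blast
    then show "h \<otimes>\<^bsub>G\<^esub> s \<in> H" using subgroup.m_closed[OF assms(2) \<open>h \<in> H\<close>] by blast
  qed
  have RI: "\<And>t v. restrict ((?PG ^^ t) v) H = (?PH ^^ t) (restrict v H)"
    using restrict_iter[OF Hc Hm] by blast
  have Ec: "E \<subseteq> carrier G" using assms(8,9) by blast
  have wHw: "\<And>h. h \<in> H \<Longrightarrow> \<exists>ws. length ws = ?wH h \<and> set ws \<subseteq> E \<and> foldr (\<lambda>a b. a \<otimes>\<^bsub>G\<^esub> b) ws \<one>\<^bsub>G\<^esub> = h"
  proof -
    fix h assume "h \<in> H"
    then have "h \<in> generate G E" using assms(6) by simp
    from word_exists[OF assms(1) Ec assms(5) this]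
    show "\<exists>ws. length ws = ?wH h \<and> set ws \<subseteq> E \<and> foldr (\<lambda>a b. a \<otimes>\<^bsub>G\<^esub> b) ws \<one>\<^bsub>G\<^esub> = h"
      by (rule word_len_witness)
  qed
  have wGw: "\<And>h. h \<in> carrier G \<Longrightarrow> \<exists>ws. length ws = ?wG h \<and> set ws \<subseteq> D \<and> foldr (\<lambda>a b. a \<otimes>\<^bsub>G\<^esub> b) ws \<one>\<^bsub>G\<^esub> = h"
  proof -
    fix h assume "h \<in> carrier G"
    then have "h \<in> generate G D" using assms(11) by simp
    from word_exists[OF assms(1) assms(9) assms(10) this]
    show "\<exists>ws. length ws = ?wG h \<and> set ws \<subseteq> D \<and> foldr (\<lambda>a b. a \<otimes>\<^bsub>G\<^esub> b) ws \<one>\<^bsub>G\<^esub> = h"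
      by (rule word_len_witness)
  qed
  have wle: "\<And>h. h \<in> H \<Longrightarrow> ?wG h \<le> ?wH h"
  proof -
    fix h assume "h \<in> H"
    then obtain ws where "length ws = ?wH h" "set ws \<subseteq> E" "foldr (\<lambda>a b. a \<otimes>\<^bsub>G\<^esub> b) ws \<one>\<^bsub>G\<^esub> = h"
      using wHw by blast
    then show "?wG h \<le> ?wH h" using word_len_le[of ws D G h] assms(8) by auto
  qed
  have finF: "\<And>n. finite {h \<in> H. ?wG h < n}"
  proof -
    fix n
    have "{h \<in> H. ?wG h < n} \<subseteq> (\<lambda>ws. foldr (\<lambda>a b. a \<otimes>\<^bsub>G\<^esub> b) ws \<one>\<^bsub>G\<^esub>) ` {ws. set ws \<subseteq> D \<and> length ws \<le> n}"
    proof
      fix h assume "h \<in> {h \<in> H. ?wG h < n}"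
      then have "h \<in> carrier G" "?wG h < n" using Hc by auto
      then obtain ws where "length ws = ?wG h" "set ws \<subseteq> D" "foldr (\<lambda>a b. a \<otimes>\<^bsub>G\<^esub> b) ws \<one>\<^bsub>G\<^esub> = h"
        using wGw by blast
      then show "h \<in> (\<lambda>ws. foldr (\<lambda>a b. a \<otimes>\<^bsub>G\<^esub> b) ws \<one>\<^bsub>G\<^esub>) ` {ws. set ws \<subseteq> D \<and> length ws \<le> n}"
        using \<open>?wG h < n\<close> by (intro image_eqI[of _ _ ws]) auto
    qed
    moreover have "finite {ws. set ws \<subseteq> D \<and> length ws \<le> n}"
      using finite_lists_length_le[OF assms(7)] by blast
    ultimately show "finite {h \<in> H. ?wG h < n}" by (meson finite_imageI finite_subset)
  qed
  have pow: "\<And>e::real. e > 0 \<Longrightarrow> \<exists>m. (1/2)^m \<le> e"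
  proof -
    fix e :: real assume "e > 0"
    obtain m where "(1/2::real)^m < e" using real_arch_pow_inv[OF \<open>e > 0\<close>, of "1/2"] by auto
    then show "\<exists>m. (1/2::real)^m \<le> e" by (auto intro: less_imp_le)
  qed
  define y where "y = restrict x H"
  have yA: "y \<in> H \<rightarrow>\<^sub>E A" unfolding y_def restrict_PiE_iff using xA Hc PiE_mem by blast
  have "equicontinuity_point G E H A ?PH y"
    unfolding equicontinuity_point_def
  proof (intro conjI yA allI impI)
    fix \<epsilon> :: real assume "\<epsilon> > 0"
    obtain m where m: "(1/2::real)^m \<le> \<epsilon>" using pow[OF \<open>\<epsilon> > 0\<close>] by blast
    obtain \<delta>G where dG: "\<delta>G > 0" "\<And>t. (?PG ^^ t) ` cantor_ball G D (carrier G) A x \<delta>G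
          \<subseteq> cantor_ball G D (carrier G) A ((?PG ^^ t) x) ((1/2)^m)"
    proof -
      have "(0::real) < (1/2)^m" by simp
      from xE[rule_format, OF this] show ?thesis using that by blast
    qed
    obtain n' where n': "(1/2::real)^n' \<le> \<delta>G" using pow[OF dG(1)] by blast
    obtain n where n: "\<And>h. h \<in> H \<Longrightarrow> ?wG h < n' \<Longrightarrow> ?wH h < n"
    proof -
      have "finite (?wH ` {h \<in> H. ?wG h < n'})" using finF by blast
      then obtain b where "\<forall>k \<in> ?wH ` {h \<in> H. ?wG h < n'}. k \<le> b"
        using finite_nat_set_iff_bounded_le by blast
      note b = this
      show ?thesis
      proof (rule that[of "Suc b"])
        fix h assume "h \<in> H" "?wG h < n'"
        then have "?wH h \<le> b" using b by blast
        then show "?wH h < Suc b" by simp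
      qed
    qed
    show "\<exists>\<delta>>0. \<forall>t. (?PH ^^ t) ` cantor_ball G E H A y \<delta> \<subseteq> cantor_ball G E H A ((?PH ^^ t) y) \<epsilon>"
    proof (intro exI[of _ "(1/2)^n"] conjI allI subsetI)
      show "(0::real) < (1/2)^n" by simp
    next
      fix t w assume "w \<in> (?PH ^^ t) ` cantor_ball G E H A y ((1/2)^n)"
      then obtain z where z: "z \<in> cantor_ball G E H A y ((1/2)^n)" and w: "w = (?PH ^^ t) z" by blast
      have zA: "z \<in> H \<rightarrow>\<^sub>E A" and zy: "\<And>h. h \<in> H \<Longrightarrow> ?wH h < n \<Longrightarrow> y h = z h"
        using z unfolding cantor_ball_def dist_le_iff by auto
      define x' where "x' = (\<lambda>g\<in>carrier G. if g \<in> H then z g else x g)"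
      have x'A: "x' \<in> carrier G \<rightarrow>\<^sub>E A" unfolding x'_def restrict_PiE_iff
      proof (intro ballI)
        fix g assume g: "g \<in> carrier G"
        show "(if g \<in> H then z g else x g) \<in> A"
          using PiE_mem[OF zA, of g] PiE_mem[OF xA, of g] g by simp
      qed
      have "cantor_dist G D (carrier G) x x' \<le> (1/2)^n'"
        unfolding dist_le_iff
      proof (intro ballI impI)
        fix g assume g: "g \<in> carrier G" "?wG g < n'"
        show "x g = x' g"
        proof (cases "g \<in> H")
          case True
          then show ?thesis using zy[OF True n[OF True g(2)]] g(1) unfolding x'_def y_def by simp
        qed (simp add: x'_def g)
      qed
      then have "x' \<in> cantor_ball G D (carrier G) A x \<delta>G" using x'A n' unfolding cantor_ball_def by auto
      then have "(?PG ^^ t) x' \<in> cantor_ball G D (carrier G) A ((?PG ^^ t) x) ((1/2)^m)" using dG(2) by blast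
      then have GA: "(?PG ^^ t) x' \<in> carrier G \<rightarrow>\<^sub>E A"
        and Gag: "\<And>g. g \<in> carrier G \<Longrightarrow> ?wG g < m \<Longrightarrow> (?PG ^^ t) x g = (?PG ^^ t) x' g"
        unfolding cantor_ball_def dist_le_iff by auto
      have rz: "restrict x' H = z"
      proof
        fix h show "restrict x' H h = z h"
        proof (cases "h \<in> H")
          case True then show ?thesis using Hc unfolding x'_def by auto
        next
          case False then show ?thesis using zA PiE_arb[of z H _ h] by simp
        qed
      qed
      have wr: "w = restrict ((?PG ^^ t) x') H" using RI[of t x'] rz w by simp
      have yr: "(?PH ^^ t) y = restrict ((?PG ^^ t) x) H" using RI[of t x] y_def by simp
      have wA: "w \<in> H \<rightarrow>\<^sub>E A" unfolding wr restrict_PiE_iff using GA Hc PiE_mem by blast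
      have "cantor_dist G E H ((?PH ^^ t) y) w \<le> (1/2)^m"
        unfolding dist_le_iff
      proof (intro ballI impI)
        fix h assume h: "h \<in> H" "?wH h < m"
        then have "?wG h < m" using wle by (meson le_less_trans)
        then show "(?PH ^^ t) y h = w h" using Gag[of h] h Hc wr yr by auto
      qed
      then show "w \<in> cantor_ball G E H A ((?PH ^^ t) y) \<epsilon>" using wA m unfolding cantor_ball_def by auto
    qed
  qed
  then show ?thesis by blast
qed

end
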